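(* Let $\rho$ be a function quasi-norm over a $\sigma$-finite measure space $(\Omega,\Sigma,\mu)$. Then $\rho$ is locally dominating if and only if $L_\rho^d=L_\rho^b$. Moreover, if $\rho$ is dominating, then $\rho$ is minimal.
   Context: $L_0^+(\mu)$ / $L_0(\mu)$: measurable functions $\Omega\to[0,\infty]$ / $\Omega\to\mathbb{F}$ modulo a.e. equality. A function quasi-norm is $\rho\colon L_0^+(\mu)\to[0,\infty]$ with (F1) $\rho(tf)=t\rho(f)$, $t\ge0$; (F2) $f\le g$ a.e. $\Rightarrow\rho(f)\le\rho(g)$; (F3) $\rho(\chi_E)<\infty$ if $\mu(E)<\infty$; (F4) for all $E$ with $\mu(E)<\infty$ and $\varepsilon>0$ there is $\delta>0$ with $\mu(A)\le\varepsilon$ whenever $A\subseteq E$ measurable and $\rho(\chi_A)\le\delta$; (F5) $\rho(f+g)\le\kappa(\rho(f)+\rho(g))$. $L_\rho=\{f\in L_0(\mu):\rho(|f|)<\infty\}$ quasi-normed by $\rho(|f|)$. $g\in L_0^+(\mu)$ with $\rho(g)<\infty$ is dominating if $\lim_n\rho(g_n)=0$ for every non-increasing $(g_n)$ in $L_0^+(\mu)$ with $g_1\le g$ and $\lim g_n=0$. $L_\rho^d=\{f\in L_\rho:|f|\text{ dominating}\}$; $\rho$ is dominating if $L_\rho^d=L_\rho$, and locally dominating if $\chi_E$ is dominating for every $E$ with $\mu(E)<\infty$. $L_\rho^b$ is the closure in $L_\rho$ of $\operatorname{span}\{\chi_E:\mu(E)<\infty\}$; $\rho$ is minimal if $L_\rho^b=L_\rho$.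 *)

theory Defs
  imports "HOL-Analysis.Analysis"
begin

text \<open>Elements of L_0^+(mu) are represented by measurable functions into ennreal;
  rho is only ever applied to measurable functions. Axiom (F2) makes rho
  invariant under a.e. equality, so working with representatives is harmless.\<close>

definition function_quasi_norm :: "'a measure \<Rightarrow> (('a \<Rightarrow> ennreal) \<Rightarrow> ennreal) \<Rightarrow> bool" where
  "function_quasi_norm M \<rho> \<longleftrightarrow>
     (\<forall>f\<in>borel_measurable M. \<forall>t::real. t \<ge> 0 \<longrightarrow> \<rho> (\<lambda>x. ennreal t * f x) = ennreal t * \<rho> f) \<and>
     (\<forall>f\<in>borel_measurable M. \<forall>g\<in>borel_measurable M.
        (AE x in M. f x \<le> g x) \<longrightarrow> \<rho> f \<le> \<rho> g) \<and>
     (\<forall>E\<in>sets M. emeasure M E < \<infinity> \<longrightarrow> \<rho> (indicator E) < \<infinity>) \<and>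
     (\<forall>E\<in>sets M. emeasure M E < \<infinity> \<longrightarrow>
        (\<forall>\<epsilon>::real. \<epsilon> > 0 \<longrightarrow> (\<exists>\<delta>::real. \<delta> > 0 \<and>
           (\<forall>A\<in>sets M. A \<subseteq> E \<longrightarrow> \<rho> (indicator A) \<le> ennreal \<delta> \<longrightarrow> emeasure M A \<le> ennreal \<epsilon>)))) \<and>
     (\<exists>\<kappa>::real. \<forall>f\<in>borel_measurable M. \<forall>g\<in>borel_measurable M.
        \<rho> (\<lambda>x. f x + g x) \<le> ennreal \<kappa> * (\<rho> f + \<rho> g))"

definition Lrho :: "'a measure \<Rightarrow> (('a \<Rightarrow> ennreal) \<Rightarrow> ennreal) \<Rightarrow> ('a \<Rightarrow> 'f::real_normed_field) set" where
  "Lrho M \<rho> = {f. f \<in> borel_measurable M \<and> \<rho> (\<lambda>x. ennreal (norm (f x))) < \<infinity>}"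

definition dominating_fun :: "'a measure \<Rightarrow> (('a \<Rightarrow> ennreal) \<Rightarrow> ennreal) \<Rightarrow> ('a \<Rightarrow> ennreal) \<Rightarrow> bool" where
  "dominating_fun M \<rho> g \<longleftrightarrow> g \<in> borel_measurable M \<and> \<rho> g < \<infinity> \<and>
     (\<forall>gs :: nat \<Rightarrow> 'a \<Rightarrow> ennreal.
        (\<forall>n. gs n \<in> borel_measurable M) \<longrightarrow>
        (\<forall>n. AE x in M. gs (Suc n) x \<le> gs n x) \<longrightarrow>
        (AE x in M. gs 0 x \<le> g x) \<longrightarrow>
        (AE x in M. (\<lambda>n. gs n x) \<longlonglongrightarrow> 0) \<longrightarrow>
        (\<lambda>n. \<rho> (gs n)) \<longlonglongrightarrow> 0)"

definition Ld :: "'a measure \<Rightarrow> (('a \<Rightarrow> ennreal) \<Rightarrow> ennreal) \<Rightarrow> ('a \<Rightarrow> 'f::real_normed_field) set" where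
  "Ld M \<rho> = {f \<in> Lrho M \<rho>. dominating_fun M \<rho> (\<lambda>x. ennreal (norm (f x)))}"

definition dominating_qn :: "'a measure \<Rightarrow> (('a \<Rightarrow> ennreal) \<Rightarrow> ennreal) \<Rightarrow> 'f::real_normed_field itself \<Rightarrow> bool" where
  "dominating_qn M \<rho> _ \<longleftrightarrow> (Ld M \<rho> :: ('a \<Rightarrow> 'f) set) = Lrho M \<rho>"

definition locally_dominating :: "'a measure \<Rightarrow> (('a \<Rightarrow> ennreal) \<Rightarrow> ennreal) \<Rightarrow> bool" where
  "locally_dominating M \<rho> \<longleftrightarrow>
     (\<forall>E\<in>sets M. emeasure M E < \<infinity> \<longrightarrow> dominating_fun M \<rho> (indicator E))"

definition simple_span :: "'a measure \<Rightarrow> ('a \<Rightarrow> 'f::real_normed_field) set" where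
  "simple_span M = {(\<lambda>x. \<Sum>i<n. (c i :: 'f) * indicator (E i) x) | (n::nat) c E.
       \<forall>i<n. E i \<in> sets M \<and> emeasure M (E i) < \<infinity>}"

definition Lb :: "'a measure \<Rightarrow> (('a \<Rightarrow> ennreal) \<Rightarrow> ennreal) \<Rightarrow> ('a \<Rightarrow> 'f::real_normed_field) set" where
  "Lb M \<rho> = {f \<in> Lrho M \<rho>. \<forall>\<epsilon>::real. \<epsilon> > 0 \<longrightarrow>
      (\<exists>s\<in>simple_span M. \<rho> (\<lambda>x. ennreal (norm (f x - s x))) < ennreal \<epsilon>)}"

definition minimal_qn :: "'a measure \<Rightarrow> (('a \<Rightarrow> ennreal) \<Rightarrow> ennreal) \<Rightarrow> 'f::real_normed_field itself \<Rightarrow> bool" where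
  "minimal_qn M \<rho> _ \<longleftrightarrow> (Lb M \<rho> :: ('a \<Rightarrow> 'f) set) = Lrho M \<rho>"

end

theory Submission
  imports Defs "HOL-Computational_Algebra.Fundamental_Theorem_Algebra"
begin


definition mpr :: "real poly \<Rightarrow> 'b::real_algebra_1 poly" where
  "mpr p = map_poly of_real p"

lemma coeff_mpr [simp]: "coeff (mpr p) n = of_real (coeff p n)"
  by (simp add: mpr_def coeff_map_poly)

lemma mpr_mult: "mpr (p * q) = (mpr p * mpr q :: 'b::{real_algebra_1,comm_ring_1} poly)"
  by (rule poly_eqI) (simp add: coeff_mult of_real_sum)

lemma mpr_diff: "mpr (p - q) = (mpr p - mpr q :: 'b::{real_algebra_1,comm_ring_1} poly)"
  by (rule poly_eqI) simp

lemma mpr_add: "mpr (p + q) = (mpr p + mpr q :: 'b::{real_algebra_1,comm_ring_1} poly)"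
  by (rule poly_eqI) simp

lemma mpr_one: "mpr 1 = (1 :: 'b::{real_algebra_1,comm_ring_1} poly)"
  by (simp add: mpr_def)

lemma mpr_power: "mpr (p ^ n) = (mpr p ^ n :: 'b::{real_algebra_1,comm_ring_1} poly)"
  by (induction n) (simp_all add: mpr_one mpr_mult)

lemma mpr_pCons: "mpr (pCons a p) = pCons (of_real a) (mpr p)"
  by (simp add: mpr_def map_poly_pCons)

lemma mpr_0 [simp]: "mpr 0 = 0"
  by (simp add: mpr_def)

lemma poly_mpr_of_real: "poly (mpr p) (of_real r :: 'b::{real_algebra_1,comm_ring_1}) = of_real (poly p r)"
  by (induction p) (simp_all add: mpr_pCons)

lemma poly_mpr_cnj: "poly (mpr p) (cnj z) = cnj (poly (mpr p) z)"
  by (induction p) (simp_all add: mpr_pCons)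

lemma degree_mpr: "degree (mpr p :: 'b::{real_algebra_1,comm_ring_1} poly) = degree p"
  unfolding mpr_def by (rule degree_map_poly) simp

lemma lead_mpr: "lead_coeff (mpr p :: 'b::{real_algebra_1,comm_ring_1} poly) = of_real (lead_coeff p)"
  by (simp add: degree_mpr)

lemma mpr_inj: "mpr p = (mpr q :: 'b::{real_algebra_1,comm_ring_1} poly) \<Longrightarrow> p = q"
  by (metis coeff_mpr of_real_eq_iff poly_eqI)

definition qp :: "complex \<Rightarrow> real poly" where
  "qp z = [:(cmod z)^2, - 2 * Re z, 1:]"

lemma poly_qp: "poly (mpr (qp z)) (x::'b::{real_algebra_1,comm_ring_1}) = x*x - of_real (2 * Re z) * x + of_real ((cmod z)^2)"
  by (simp add: qp_def mpr_pCons algebra_simps)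

lemma qp_ne0: "qp z \<noteq> 0" by (simp add: qp_def)
lemma degree_qp: "degree (qp z) = 2" by (simp add: qp_def)
lemma lead_qp: "lead_coeff (qp z) = 1" by (simp add: qp_def)

lemma poly_qp_self: "poly (mpr (qp z)) z = 0"
  unfolding poly_qp cmod_power2
  by (simp add: complex_eq_iff power2_eq_square algebra_simps)

lemma low_degree_poly:
  assumes "degree (r::'a::comm_ring_1 poly) \<le> 1"
  shows "poly r x = coeff r 0 + coeff r 1 * x"
proof -
  have "r = [:coeff r 0, coeff r 1:]"
    by (rule poly_eqI) (use assms in \<open>auto simp: coeff_pCons coeff_eq_0 split: nat.splits\<close>)
  then show ?thesis by (metis add_cancel_right_right mult_zero_left poly_pCons poly_0 mult.commute)
qed

lemma qp_dvd:
  assumes "poly (mpr P) w = 0" "Im w \<noteq> 0"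
  shows "qp w dvd P"
proof -
  define R where "R = P mod qp w"
  define D where "D = P div qp w"
  have PR: "P = qp w * D + R" unfolding R_def D_def by (simp add: mult.commute)
  have "R = 0 \<or> degree R < 2" using degree_mod_less[OF qp_ne0, of P] degree_qp unfolding R_def by simp
  then have dR: "degree R \<le> 1" by auto
  have "mpr P = mpr (qp w) * mpr D + (mpr R :: complex poly)"
    by (subst PR) (simp add: mpr_mult mpr_add)
  then have e1: "poly (mpr R) w = 0" using assms(1) poly_qp_self[of w] by simp
  have "poly (mpr P) (cnj w) = 0" using assms(1) poly_mpr_cnj[of P w] by simp
  moreover have "poly (mpr (qp w)) (cnj w) = 0"
    using poly_qp_self[of w] poly_mpr_cnj[of "qp w" w] by simp
  ultimately have e2: "poly (mpr R) (cnj w) = 0" using \<open>mpr P = _\<close>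
    by (metis add_0 mult_zero_left poly_add poly_mult)
  have dR': "degree (mpr R :: complex poly) \<le> 1" using dR by (simp add: degree_mpr)
  have a1: "of_real (coeff R 0) + of_real (coeff R 1) * w = 0"
    using e1 low_degree_poly[OF dR', of w] by simp
  have a2: "of_real (coeff R 0) + of_real (coeff R 1) * cnj w = 0"
    using e2 low_degree_poly[OF dR', of "cnj w"] by simp
  have "of_real (coeff R 1) * (w - cnj w) = (of_real (coeff R 0) + of_real (coeff R 1) * w) - (of_real (coeff R 0) + of_real (coeff R 1) * cnj w)"
    by (simp add: algebra_simps)
  also have "\<dots> = 0 - 0" by (simp only: a1 a2)
  finally have "of_real (coeff R 1) * (w - cnj w) = 0" by simp
  moreover have "w - cnj w \<noteq> 0" using assms(2) by (simp add: complex_eq_iff)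
  ultimately have c1: "coeff R 1 = 0" by simp
  then have c0: "coeff R 0 = 0" using a1 by simp
  have "R = 0"
  proof (rule poly_eqI)
    fix n show "coeff R n = coeff 0 n"
      using dR c0 c1 coeff_eq_0[of R n] by (cases n; cases "n - 1"; auto)
  qed
  then show ?thesis unfolding R_def by (simp add: mod_eq_0_iff_dvd)
qed

definition Fq :: "'f::real_normed_field \<Rightarrow> complex \<Rightarrow> real" where
  "Fq x z = norm (poly (mpr (qp z)) x)"

lemma Fq_real: "Fq x (complex_of_real r) = (norm (x - of_real r))^2"
proof -
  have "poly (mpr (qp (complex_of_real r))) x = (x - of_real r)^2"
    unfolding poly_qp by (simp add: power2_eq_square algebra_simps)
  then show ?thesis unfolding Fq_def by (simp add: norm_power)
qed

lemma lower_bound: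
  fixes x :: "'f::real_normed_field"
  assumes m0: "0 \<le> m" and mF: "\<And>z. m \<le> Fq x z"
  shows "lead_coeff P = 1 \<Longrightarrow> m ^ degree P \<le> (norm (poly (mpr P) x))^2"
proof (induction "degree P" arbitrary: P rule: less_induct)
  case less
  have P0: "P \<noteq> 0" using less.prems by auto
  show ?case
  proof (cases "degree P = 0")
    case True
    have "coeff P 1 = 0" using True by (simp add: coeff_eq_0)
    moreover have "coeff P 0 = 1" using True less.prems by simp
    ultimately have "poly (mpr P) x = 1"
      using low_degree_poly[of "mpr P" x] True by (simp add: degree_mpr)
    then show ?thesis using True by simp
  next
    case False
    have "\<not> constant (poly (mpr P :: complex poly))"
      using False by (simp add: constant_degree degree_mpr)
    then obtain w where w: "poly (mpr P :: complex poly) w = 0"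
      using fundamental_theorem_of_algebra by blast
    show ?thesis
    proof (cases "Im w = 0")
      case True
      define r where "r = Re w"
      have wr: "w = complex_of_real r" using True unfolding r_def by (simp add: complex_eq_iff)
      have "poly P r = 0" using w poly_mpr_of_real[of P r, where 'b=complex] wr by simp
      then obtain Q where PQ: "P = [:-r, 1:] * Q" using poly_eq_0_iff_dvd by (metis dvdE)
      have Q0: "Q \<noteq> 0" using P0 PQ by auto
      have "lead_coeff P = lead_coeff [:-r, 1:] * lead_coeff Q" by (simp only: PQ lead_coeff_mult)
      then have lQ: "lead_coeff Q = 1" using less.prems by simp
      have "degree P = degree [:-r, 1:] + degree Q" unfolding PQ by (rule degree_mult_eq) (use Q0 in auto)
      then have dQ: "degree P = Suc (degree Q)" by simp
      have IH: "m ^ degree Q \<le> (norm (poly (mpr Q) x))^2"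
        using less.hyps[of Q] dQ lQ by simp
      have ev: "poly (mpr P) x = (x - of_real r) * poly (mpr Q) x"
        unfolding PQ mpr_mult poly_mult by (simp add: mpr_pCons)
      have mr: "m \<le> (norm (x - of_real r))^2" using mF[of "complex_of_real r"] Fq_real by metis
      have "m ^ degree P = m * m ^ degree Q" using dQ by simp
      also have "\<dots> \<le> (norm (x - of_real r))^2 * (norm (poly (mpr Q) x))^2"
        using mr IH m0 by (intro mult_mono) auto
      also have "\<dots> = (norm (poly (mpr P) x))^2" using ev by (simp add: norm_mult power_mult_distrib)
      finally show ?thesis .
    next
      case False
      have "qp w dvd P" using qp_dvd[OF w False] .
      then obtain Q where PQ: "P = qp w * Q" by (metis dvdE)
      have Q0: "Q \<noteq> 0" using P0 PQ by auto
      have "lead_coeff P = lead_coeff (qp w) * lead_coeff Q" by (simp only: PQ lead_coeff_mult)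
      then have lQ: "lead_coeff Q = 1" using less.prems by (simp add: lead_qp)
      have "degree P = degree (qp w) + degree Q" unfolding PQ by (rule degree_mult_eq) (use Q0 qp_ne0 in auto)
      then have dQ: "degree P = 2 + degree Q" by (simp add: degree_qp)
      have IH: "m ^ degree Q \<le> (norm (poly (mpr Q) x))^2"
        using less.hyps[of Q] dQ lQ by simp
      have ev: "poly (mpr P) x = poly (mpr (qp w)) x * poly (mpr Q) x"
        unfolding PQ mpr_mult poly_mult by simp
      have mr: "m^2 \<le> (Fq x w)^2" using mF[of w] m0 by (intro power_mono) auto
      have "m ^ degree P = m^2 * m ^ degree Q" unfolding dQ by (rule power_add)
      also have "\<dots> \<le> (Fq x w)^2 * (norm (poly (mpr Q) x))^2"
        using mr IH m0 by (intro mult_mono) auto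
      also have "\<dots> = (norm (poly (mpr P) x))^2" using ev unfolding Fq_def by (simp add: norm_mult power_mult_distrib)
      finally show ?thesis .
    qed
  qed
qed

lemma Fq_eq: "Fq x z = norm (x*x - of_real (2*Re z)*x + of_real ((cmod z)^2))"
  by (simp add: Fq_def poly_qp)

lemma Fq_cont: "continuous_on A (Fq x)"
  unfolding Fq_eq[abs_def] by (intro continuous_intros)

lemma Fq_coercive: "(cmod z)^2 - 2*cmod z*norm x - (norm x)^2 \<le> Fq x z"
proof -
  define a where "a = x*x - of_real (2*Re z)*x + of_real ((cmod z)^2)"
  have "(cmod z)^2 = norm (of_real ((cmod z)^2) :: 'a)" by (metis abs_power2 norm_of_real abs_norm_cancel)
  also have "(of_real ((cmod z)^2) :: 'a) = a - x*x + of_real (2*Re z)*x" unfolding a_def by simp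
  also have "norm \<dots> \<le> norm a + norm (x*x) + norm (of_real (2*Re z)*x)"
    by (smt (verit) norm_triangle_ineq norm_triangle_ineq4)
  also have "norm (of_real (2*Re z)*x) \<le> 2 * cmod z * norm x"
    by (simp add: norm_mult mult_right_mono abs_Re_le_cmod)
  finally show ?thesis unfolding Fq_eq a_def[symmetric] by (simp add: norm_mult power2_eq_square)
qed

lemma Fq_zero: "Fq x 0 = (norm x)^2"
  by (simp add: Fq_eq norm_mult power2_eq_square)

lemma Fq_nonneg: "0 \<le> Fq x z" by (simp add: Fq_def)

lemma ostrowski_root:
  fixes x :: "'f::real_normed_field"
  shows "\<exists>z. Fq x z = 0"
proof -
  define N where "N = norm x"
  define R where "R = 3 * N + 1"
  have N0: "0 \<le> N" unfolding N_def by simp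
  have far: "Fq x 0 < Fq x z" if "R \<le> cmod z" for z
  proof -
    have c: "3 * N + 1 \<le> cmod z" using that R_def by simp
    have "(3*N+1) * (N+1) \<le> cmod z * (cmod z - 2*N)"
      using c N0 by (intro mult_mono) auto
    then have "2 * N^2 < (cmod z)^2 - 2*cmod z*N - N^2"
      using N0 by (simp add: power2_eq_square algebra_simps)
    then show ?thesis using Fq_coercive[of z x] Fq_zero[of x] zero_le_power2[of N] unfolding N_def by linarith
  qed
  obtain zm where zm: "zm \<in> cball 0 R" "\<And>z. z \<in> cball 0 R \<Longrightarrow> Fq x zm \<le> Fq x z"
    using continuous_attains_inf[OF compact_cball, of 0 R "Fq x"] N0 R_def Fq_cont
    by (metis centre_in_cball ex_in_conv le_add_same_cancel2 order_trans zero_le_mult_iff zero_le_numeral zero_le_one add_nonneg_nonneg)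
  have zm0: "Fq x zm \<le> Fq x 0" using zm(2)[of 0] N0 R_def by simp
  have mmin: "Fq x zm \<le> Fq x z" for z
  proof (cases "z \<in> cball 0 R")
    case True then show ?thesis using zm by auto
  next
    case False then have "R \<le> cmod z" by (simp add: dist_norm)
    then show ?thesis using far zm0 by fastforce
  qed
  define m where "m = Fq x zm"
  define S where "S = {z. Fq x z = m}"
  have SR: "S \<subseteq> cball 0 R"
  proof
    fix z assume "z \<in> S"
    then have "Fq x z = m" by (simp add: S_def)
    then show "z \<in> cball 0 R" using far[of z] zm0 m_def by (force simp: dist_norm)
  qed
  have "closed S" unfolding S_def
    using continuous_closed_vimage[of "{m}" "Fq x"] Fq_cont[of UNIV x]
    by (simp add: continuous_on_eq_continuous_at vimage_def)
  then have "compact S" using SR by (metis bounded_cball bounded_subset compact_eq_bounded_closed)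
  moreover have "S \<noteq> {}" using m_def S_def by auto
  ultimately obtain z0 where z0: "z0 \<in> S" "\<And>z. z \<in> S \<Longrightarrow> cmod z \<le> cmod z0"
    using continuous_attains_sup[of S cmod] continuous_on_norm_id by blast
  have Fz0: "Fq x z0 = m" using z0 S_def by simp
  have m0: "0 \<le> m" unfolding m_def by (rule Fq_nonneg)
  have mF: "\<And>z. m \<le> Fq x z" unfolding m_def by (rule mmin)
  show ?thesis
  proof (cases "m = 0")
    case True then show ?thesis using m_def by auto
  next
    case False
    then have mpos: "0 < m" using m0 by simp
    define e where "e = m / 2"
    have e0: "0 < e" using mpos e_def by simp
    define a where "a = Re z0"
    define b where "b = Im z0"
    define s where "s = sqrt (b^2 + e)"
    have s2: "s^2 = b^2 + e" unfolding s_def using e0 by simp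
    have s0: "0 < s" unfolding s_def using e0 by (simp add: add_nonneg_pos)
    define z1 where "z1 = Complex a s"
    have cz1: "(cmod z1)^2 = (cmod z0)^2 + e"
      unfolding cmod_power2 z1_def a_def b_def using s2 b_def by simp
    have "cmod z0 < cmod z1"
      using cz1 e0 by (smt (verit) norm_ge_zero power2_le_imp_le)
    then have "z1 \<notin> S" using z0(2) by force
    then have Fz1: "m < Fq x z1" using mF[of z1] S_def by force
    have Imz1: "Im z1 \<noteq> 0" using s0 z1_def by simp
    have q0z1: "poly (mpr (qp z0)) z1 = - of_real e"
      unfolding poly_qp cmod_power2 z1_def a_def[symmetric] b_def[symmetric]
      using s2 by (simp add: complex_eq_iff power2_eq_square algebra_simps)
    have bound: "Fq x z1 \<le> m + m * (1/2)^(Suc k)" for k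
    proof -
      define n where "n = Suc k"
      define P0 where "P0 = qp z0 ^ n"
      define c where "c = (- e)^n"
      define G where "G = P0 - [:c:]"
      have dP0: "degree P0 = 2 * n" unfolding P0_def by (simp add: degree_power_eq qp_ne0 degree_qp)
      have lP0: "lead_coeff P0 = 1" unfolding P0_def by (simp add: lead_coeff_power lead_qp)
      have cG: "coeff G (2*n) = 1" unfolding G_def using lP0 dP0 n_def by simp
      have dG: "degree G = 2 * n"
      proof (rule antisym)
        show "degree G \<le> 2 * n" unfolding G_def using dP0 by (intro degree_diff_le) auto
        show "2 * n \<le> degree G" using cG by (intro le_degree) simp
      qed
      have lG: "lead_coeff G = 1" using cG dG by simp
      have "poly (mpr G) z1 = (- of_real e)^n - of_real c"
        unfolding G_def P0_def mpr_diff mpr_power poly_diff poly_power q0z1 by (simp add: mpr_pCons)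
      then have "poly (mpr G) z1 = 0" unfolding c_def by simp
      then have "qp z1 dvd G" using qp_dvd Imz1 by blast
      then obtain Q where GQ: "G = qp z1 * Q" by (metis dvdE)
      have Q0: "Q \<noteq> 0" using GQ lG by auto
      have "lead_coeff G = lead_coeff (qp z1) * lead_coeff Q" by (simp only: GQ lead_coeff_mult)
      then have lQ: "lead_coeff Q = 1" using lG by (simp add: lead_qp)
      have "degree G = degree (qp z1) + degree Q" unfolding GQ by (rule degree_mult_eq) (use Q0 qp_ne0 in auto)
      then have dQ: "degree Q = 2 * k" using dG n_def by (simp add: degree_qp)
      have "m ^ (2*k) \<le> (norm (poly (mpr Q) x))^2"
        using lower_bound[OF m0 mF lQ] dQ by simp
      then have "(m^k)^2 \<le> (norm (poly (mpr Q) x))^2" by (simp add: power_mult[symmetric] mult.commute)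
      then have mQ: "m^k \<le> norm (poly (mpr Q) x)" by (rule power2_le_imp_le) simp
      have "poly (mpr G) x = poly (mpr (qp z1)) x * poly (mpr Q) x"
        unfolding GQ mpr_mult poly_mult by simp
      then have nG: "norm (poly (mpr G) x) = Fq x z1 * norm (poly (mpr Q) x)"
        by (simp add: Fq_def norm_mult)
      have "poly (mpr G) x = (poly (mpr (qp z0)) x)^n - of_real c"
        unfolding G_def P0_def mpr_diff mpr_power poly_diff poly_power by (simp add: mpr_pCons)
      then have "norm (poly (mpr G) x) \<le> (Fq x z0)^n + \<bar>c\<bar>"
        unfolding Fq_def by (metis norm_of_real norm_power norm_triangle_ineq4)
      also have "\<dots> = m^n + e^n" using Fz0 e0 by (simp add: c_def power_abs)
      finally have "Fq x z1 * m^k \<le> m^n + e^n"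
        using nG mQ Fq_nonneg[of x z1] by (smt (verit) mult_left_mono)
      also have "\<dots> = m^k * (m + m * (1/2)^n)"
        unfolding e_def n_def by (simp add: power_divide algebra_simps)
      finally have "m^k * Fq x z1 \<le> m^k * (m + m * (1/2)^n)" by (simp add: mult.commute)
      then show ?thesis using mpos n_def by (simp add: mult_le_cancel_left_pos)
    qed
    obtain k where k: "(1/2::real)^k < (Fq x z1 - m) / m"
      using real_arch_pow_inv[of "(Fq x z1 - m) / m" "1/2"] Fz1 mpos by auto
    have "(1/2::real)^(Suc k) \<le> (1/2)^k" by (rule power_decreasing) auto
    then have "m * (1/2::real)^(Suc k) < Fq x z1 - m"
      using k mpos by (smt (verit) mult_left_mono pos_less_divide_eq mult.commute)
    then show ?thesis using bound[of k] by simp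
  qed
qed


lemma sq_form:
  fixes v :: "'f::real_normed_field"
  shows "\<exists>a b. (v - of_real a)^2 = - of_real (b^2)"
proof -
  obtain z where "Fq v z = 0" using ostrowski_root by blast
  then have "v * v - of_real (2*Re z) * v + of_real ((cmod z)^2) = 0" by (simp add: Fq_eq)
  then have "(v - of_real (Re z))^2 = - of_real ((Im z)^2)"
    unfolding cmod_power2 by (simp add: power2_eq_square algebra_simps)
  then show ?thesis by blast
qed

lemma j_bound:
  fixes j :: "'f::real_normed_field"
  assumes j: "j * j = -1"
  shows "cmod z \<le> 2 * norm (of_real (Re z) + of_real (Im z) * j)"
proof -
  have "norm (j * j) = 1" using j by simp
  then have "norm j * norm j = 1" by (simp only: norm_mult)
  moreover have "sqrt (norm j * norm j) = norm j" by simp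
  ultimately have nj: "norm j = 1" by simp
  define v where "v = of_real (Re z) + of_real (Im z) * j"
  define u where "u = of_real (Re z) - of_real (Im z) * j"
  have "v * u = of_real (Re z) * of_real (Re z) - of_real (Im z) * of_real (Im z) * (j * j)"
    unfolding v_def u_def by (simp add: algebra_simps)
  also have "\<dots> = of_real ((Re z)^2 + (Im z)^2)" using j by (simp add: power2_eq_square)
  finally have "v * u = of_real ((Re z)^2 + (Im z)^2)" .
  then have "norm v * norm u = norm (of_real ((Re z)^2 + (Im z)^2) :: 'f)" by (simp only: norm_mult[symmetric])
  also have "\<dots> = (Re z)^2 + (Im z)^2" by (simp only: norm_of_real) simp
  finally have e: "norm v * norm u = (cmod z)^2" by (simp only: cmod_power2)
  have "norm u \<le> norm (of_real (Re z) :: 'f) + norm (of_real (Im z) * j)"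
    unfolding u_def by (rule norm_triangle_ineq4)
  also have "\<dots> = \<bar>Re z\<bar> + \<bar>Im z\<bar>" by (simp add: norm_mult nj)
  also have "\<dots> \<le> 2 * cmod z" using abs_Re_le_cmod[of z] abs_Im_le_cmod[of z] by linarith
  finally have "norm v * norm u \<le> norm v * (2 * cmod z)" by (simp add: mult_left_mono)
  then have "cmod z * cmod z \<le> (2 * norm v) * cmod z" using e by (simp add: power2_eq_square algebra_simps)
  then show ?thesis unfolding v_def[symmetric]
    by (cases "cmod z = 0") (auto simp: mult_le_cancel_right)
qed
lemma field_structure:
  "\<exists>j::'f::real_normed_field. \<forall>v::'f. \<exists>z::complex. v = of_real (Re z) + of_real (Im z) * j \<and> cmod z \<le> 2 * norm v"
proof (cases "\<exists>(v::'f) a b. (v - of_real a)^2 = - of_real (b^2) \<and> b \<noteq> 0")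
  case False
  show ?thesis
  proof (intro exI[of _ "0::'f"] allI)
    fix v :: 'f
    obtain a b where ab: "(v - of_real a)^2 = - of_real (b^2)" using sq_form by blast
    have "b = 0"
    proof (rule ccontr)
      assume "b \<noteq> 0" then show False using False ab by blast
    qed
    then have "(v - of_real a)^2 = 0" using ab by simp
    then have "v = of_real a" by simp
    then show "\<exists>z::complex. v = of_real (Re z) + of_real (Im z) * 0 \<and> cmod z \<le> 2 * norm v"
      by (intro exI[of _ "complex_of_real a"]) simp
  qed
next
  case True
  then obtain v0 :: 'f and a0 b0 where v0: "(v0 - of_real a0)^2 = - of_real (b0^2)" "b0 \<noteq> 0" by blast
  define j where "j = (v0 - of_real a0) / of_real b0"
  have "j * j = (v0 - of_real a0)^2 / (of_real b0)^2"
    unfolding j_def by (simp add: power2_eq_square)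
  also have "\<dots> = - of_real (b0^2) / of_real (b0^2)" using v0(1) by simp
  also have "\<dots> = -1" using v0(2) by simp
  finally have jj: "j * j = -1" .
  show ?thesis
  proof (intro exI[of _ j] allI)
    fix v :: 'f
    obtain a b where ab: "(v - of_real a)^2 = - of_real (b^2)" using sq_form by blast
    have "(v - of_real a - of_real b * j) * (v - of_real a + of_real b * j) = (v - of_real a)^2 - of_real (b^2) * (j*j)"
      by (simp add: algebra_simps power2_eq_square)
    also have "\<dots> = 0" using ab jj by simp
    finally have "v - of_real a - of_real b * j = 0 \<or> v - of_real a + of_real b * j = 0"
      by simp
    moreover have "v = (v - of_real a - of_real b * j) + (of_real a + of_real b * j)" by simp
    moreover have "v = (v - of_real a + of_real b * j) + (of_real a + of_real (-b) * j)" by simp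
    ultimately have "v = of_real a + of_real b * j \<or> v = of_real a + of_real (-b) * j" by (metis add_0)
    then obtain c where c: "v = of_real a + of_real c * j" by blast
    show "\<exists>z::complex. v = of_real (Re z) + of_real (Im z) * j \<and> cmod z \<le> 2 * norm v"
      using j_bound[OF jj, of "Complex a c"] c by (intro exI[of _ "Complex a c"]) simp
  qed
qed

lemma fin_net:
  fixes R e :: real
  assumes e: "0 < e"
  shows "\<exists>cs::'f::real_normed_field list. \<forall>v::'f. norm v \<le> R \<longrightarrow> (\<exists>c\<in>set cs. dist c v < e)"
proof -
  obtain j :: 'f where j: "\<And>v. \<exists>z::complex. v = of_real (Re z) + of_real (Im z) * j \<and> cmod z \<le> 2 * norm v"
    using field_structure by blast
  define phi where "phi = (\<lambda>z::complex. (of_real (Re z) + of_real (Im z) * j :: 'f))"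
  define K where "K = phi ` cball 0 (2*R)"
  have "continuous_on (cball 0 (2*R)) phi" unfolding phi_def by (intro continuous_intros)
  then have cK: "compact K" unfolding K_def by (intro compact_continuous_image) auto
  have sub: "{v. norm v \<le> R} \<subseteq> K"
  proof
    fix v :: 'f assume "v \<in> {v. norm v \<le> R}"
    then have "norm v \<le> R" by simp
    obtain z where z: "v = phi z" "cmod z \<le> 2 * norm v" using j unfolding phi_def by blast
    then have "z \<in> cball 0 (2*R)" using \<open>norm v \<le> R\<close> by (simp add: dist_norm)
    then show "v \<in> K" unfolding K_def using z by blast
  qed
  have "K \<subseteq> (\<Union>c\<in>K. ball c e)" using e by auto
  then obtain C where C: "C \<subseteq> K" "finite C" "K \<subseteq> (\<Union>c\<in>C. ball c e)"
    using compactE_image[OF cK, of K "\<lambda>c. ball c e"] by blast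
  obtain cs where "set cs = C" using C(2) finite_list by blast
  then show ?thesis using C(3) sub by (intro exI[of _ cs]) fastforce
qed



lemma simple_span_sf:
  assumes "s \<in> simple_span M"
  shows "simple_function M (s :: 'a \<Rightarrow> 'f::real_normed_field)"
proof -
  obtain n :: nat and c E where s: "s = (\<lambda>x. \<Sum>i<n. (c i :: 'f) * indicator (E i) x)"
    and E: "\<forall>i<n. E i \<in> sets M \<and> emeasure M (E i) < \<infinity>"
    using assms unfolding simple_span_def by blast
  show ?thesis unfolding s
    by (intro simple_function_sum simple_function_mult simple_function_const) (use E in auto)
qed

lemma meas_diff_simple:
  fixes f s :: "'a \<Rightarrow> 'f::real_normed_field"
  assumes f: "f \<in> borel_measurable M" and s: "simple_function M s"
  shows "(\<lambda>x. f x - s x) \<in> borel_measurable M"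
proof (rule measurableI)
  fix B :: "'f set" assume B: "B \<in> sets borel"
  have eq: "(\<lambda>x. f x - s x) -` B \<inter> space M =
     (\<Union>v\<in>s ` space M. (s -` {v} \<inter> space M) \<inter> ((\<lambda>x. f x - v) -` B \<inter> space M))"
    by auto
  have mv: "(\<lambda>x. f x - v) \<in> borel_measurable M" for v
  proof -
    have "(\<lambda>y::'f. y - v) \<in> borel_measurable borel"
      by (intro borel_measurable_continuous_onI continuous_intros)
    from measurable_compose[OF f this] show ?thesis by simp
  qed
  show "(\<lambda>x. f x - s x) -` B \<inter> space M \<in> sets M"
    unfolding eq using simple_functionD[OF s] measurable_sets[OF mv B]
    by (intro sets.finite_UN) auto
qed simp

lemma nf_meas:
  fixes f :: "'a \<Rightarrow> 'f::real_normed_vector"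
  assumes "f \<in> borel_measurable M"
  shows "(\<lambda>x. ennreal (norm (f x))) \<in> borel_measurable M"
  using measurable_compose[OF measurable_compose[OF assms borel_measurable_norm] measurable_ennreal]
  by (simp add: comp_def)

lemma nf_indicator: "(\<lambda>x. ennreal (norm (indicator E x :: 'f::real_normed_field))) = indicator E"
  by (rule ext) (simp add: indicator_def)

locale fqn =
  fixes M :: "'a measure" and \<rho> :: "('a \<Rightarrow> ennreal) \<Rightarrow> ennreal"
  assumes fqn: "function_quasi_norm M \<rho>"
begin

lemmas fqn_unf = fqn[unfolded function_quasi_norm_def]

lemma Q1: "f \<in> borel_measurable M \<Longrightarrow> 0 \<le> t \<Longrightarrow> \<rho> (\<lambda>x. ennreal t * f x) = ennreal t * \<rho> f"
  using conjunct1[OF fqn_unf] by blast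

lemma Q2: "f \<in> borel_measurable M \<Longrightarrow> g \<in> borel_measurable M \<Longrightarrow> (AE x in M. f x \<le> g x) \<Longrightarrow> \<rho> f \<le> \<rho> g"
  using conjunct1[OF conjunct2[OF fqn_unf]] by blast

lemma Q3: "E \<in> sets M \<Longrightarrow> emeasure M E < \<infinity> \<Longrightarrow> \<rho> (indicator E) < \<infinity>"
  using conjunct1[OF conjunct2[OF conjunct2[OF fqn_unf]]] by blast

lemma Q5: "\<exists>K::real. 0 < K \<and> (\<forall>f\<in>borel_measurable M. \<forall>g\<in>borel_measurable M.
        \<rho> (\<lambda>x. f x + g x) \<le> ennreal K * (\<rho> f + \<rho> g))"
proof -
  obtain k :: real where k: "\<forall>f\<in>borel_measurable M. \<forall>g\<in>borel_measurable M.
        \<rho> (\<lambda>x. f x + g x) \<le> ennreal k * (\<rho> f + \<rho> g)"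
    using conjunct2[OF conjunct2[OF conjunct2[OF conjunct2[OF fqn_unf]]]] by blast
  have "ennreal k * a \<le> ennreal (max k 1) * a" for a
    by (intro mult_right_mono) auto
  then show ?thesis using k by (intro exI[of _ "max k 1"]) (auto intro: order_trans)
qed

definition K where "K = (SOME K::real. 0 < K \<and> (\<forall>f\<in>borel_measurable M. \<forall>g\<in>borel_measurable M.
        \<rho> (\<lambda>x. f x + g x) \<le> ennreal K * (\<rho> f + \<rho> g)))"

lemma K_pos: "0 < K" and K_tri: "f \<in> borel_measurable M \<Longrightarrow> g \<in> borel_measurable M \<Longrightarrow>
        \<rho> (\<lambda>x. f x + g x) \<le> ennreal K * (\<rho> f + \<rho> g)"
  using someI_ex[OF Q5] unfolding K_def[symmetric] by blast+

lemma rho0: "\<rho> (\<lambda>x. 0) = 0"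
  using Q1[of "\<lambda>x. 0" 0] by simp

lemma small: "0 < a \<Longrightarrow> \<exists>e::real. 0 < e \<and> ennreal K * (ennreal e + ennreal e) < a"
proof -
  assume "0 < a"
  then obtain b where b: "0 < b" "b < a" using dense by blast
  then obtain b' where b': "b = ennreal b'" "0 < b'"
    by (cases b) (auto simp: top_unique)
  define e where "e = b' / (2 * K)"
  have "ennreal K * (ennreal e + ennreal e) = ennreal (K * (e + e))"
    using K_pos b' by (simp add: e_def ennreal_plus[symmetric] ennreal_mult[symmetric])
  also have "K * (e + e) = b'" using K_pos unfolding e_def by (simp add: field_simps)
  finally show ?thesis using b b' K_pos by (intro exI[of _ e]) (simp add: e_def)
qed


lemma AE_dec:
  assumes "\<forall>n. AE x in M. gs (Suc n) x \<le> (gs n x :: ennreal)"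
  shows "AE x in M. \<forall>n m. n \<le> m \<longrightarrow> gs m x \<le> gs n x"
proof -
  have "AE x in M. \<forall>n. gs (Suc n) x \<le> gs n x" using assms by (simp add: AE_all_countable)
  then show ?thesis
    by eventually_elim (auto intro: lift_Suc_antimono_le[of "\<lambda>n. gs n _"])
qed

lemma dom_D:
  assumes "dominating_fun M \<rho> g" "\<forall>n. gs n \<in> borel_measurable M" "\<forall>n. AE x in M. gs (Suc n) x \<le> gs n x"
       "AE x in M. gs 0 x \<le> g x" "AE x in M. (\<lambda>n. gs n x) \<longlonglongrightarrow> 0"
  shows "(\<lambda>n. \<rho> (gs n)) \<longlonglongrightarrow> 0"
  using assms unfolding dominating_fun_def by blast

lemma dom_mono:
  assumes g: "dominating_fun M \<rho> g" and h: "h \<in> borel_measurable M" and le: "AE x in M. h x \<le> g x"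
  shows "dominating_fun M \<rho> h"
proof -
  have gm: "g \<in> borel_measurable M" "\<rho> g < \<infinity>" using g by (auto simp: dominating_fun_def)
  have "\<rho> h \<le> \<rho> g" using Q2[OF h gm(1) le] .
  then have "\<rho> h < \<infinity>" using gm(2) by (rule le_less_trans)
  moreover have "(\<lambda>n. \<rho> (gs n)) \<longlonglongrightarrow> 0"
    if "\<forall>n. gs n \<in> borel_measurable M" "\<forall>n. AE x in M. gs (Suc n) x \<le> gs n x"
       "AE x in M. gs 0 x \<le> h x" "AE x in M. (\<lambda>n. gs n x) \<longlonglongrightarrow> 0" for gs
  proof -
    have "AE x in M. gs 0 x \<le> g x" using that(3) le by eventually_elim (rule order_trans)
    then show ?thesis using g that unfolding dominating_fun_def by blast
  qed
  ultimately show ?thesis using h unfolding dominating_fun_def by blast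
qed

lemma min_part:
  assumes g1: "dominating_fun M \<rho> g1"
    and gs: "\<forall>n. gs n \<in> borel_measurable M" "\<forall>n. AE x in M. gs (Suc n) x \<le> gs n x"
       "AE x in M. (\<lambda>n. gs n x) \<longlonglongrightarrow> 0"
  shows "(\<lambda>n. \<rho> (\<lambda>x. min (gs n x) (g1 x))) \<longlonglongrightarrow> 0"
proof -
  have g1m: "g1 \<in> borel_measurable M" using g1 by (simp add: dominating_fun_def)
  have m: "\<forall>n. (\<lambda>x. min (gs n x) (g1 x)) \<in> borel_measurable M"
    using gs(1) g1m by (auto intro: borel_measurable_min)
  have d: "\<forall>n. AE x in M. min (gs (Suc n) x) (g1 x) \<le> min (gs n x) (g1 x)"
  proof
    fix n show "AE x in M. min (gs (Suc n) x) (g1 x) \<le> min (gs n x) (g1 x)"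
      using gs(2)[rule_format, of n] by eventually_elim (meson min.mono order_refl)
  qed
  have z: "AE x in M. (\<lambda>n. min (gs n x) (g1 x)) \<longlonglongrightarrow> 0"
    using gs(3)
  proof eventually_elim
    case (elim x)
    show ?case
      by (rule tendsto_sandwich[of "\<lambda>n. 0" _ sequentially "\<lambda>n. gs n x"]) (use elim in auto)
  qed
  have "AE x in M. min (gs 0 x) (g1 x) \<le> g1 x" by simp
  then show ?thesis using dom_D[OF g1, of "\<lambda>n x. min (gs n x) (g1 x)"] m d z by blast
qed

lemma minus_part_le:
  assumes fin1: "\<And>x. g1 x < top" and gs: "\<forall>n. AE x in M. gs (Suc n) x \<le> gs n x" "AE x in M. gs 0 x \<le> g1 x + g2 x"
  shows "AE x in M. gs n x - g1 x \<le> (g2 x :: ennreal)"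
  using AE_dec[OF gs(1)] gs(2)
proof eventually_elim
  case (elim x)
  have "gs n x \<le> gs 0 x" using elim(1) by simp
  then have "gs n x \<le> g1 x + g2 x" using elim(2) by (rule order_trans)
  then show ?case using fin1[of x] by (auto simp: ennreal_minus_le_iff add.commute)
qed

lemma minus_part:
  assumes g2: "dominating_fun M \<rho> g2" and g1m: "g1 \<in> borel_measurable M" and fin1: "\<And>x. g1 x < top"
    and gs: "\<forall>n. gs n \<in> borel_measurable M" "\<forall>n. AE x in M. gs (Suc n) x \<le> gs n x"
       "AE x in M. gs 0 x \<le> g1 x + g2 x" "AE x in M. (\<lambda>n. gs n x) \<longlonglongrightarrow> 0"
  shows "(\<lambda>n. \<rho> (\<lambda>x. gs n x - g1 x)) \<longlonglongrightarrow> 0"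
proof -
  have m: "\<forall>n. (\<lambda>x. gs n x - g1 x) \<in> borel_measurable M"
    using gs(1) g1m by (auto intro: borel_measurable_minus_ennreal)
  have d: "\<forall>n. AE x in M. gs (Suc n) x - g1 x \<le> gs n x - g1 x"
  proof
    fix n show "AE x in M. gs (Suc n) x - g1 x \<le> gs n x - g1 x"
      using gs(2)[rule_format, of n] by eventually_elim (auto intro: ennreal_minus_mono)
  qed
  have z: "AE x in M. (\<lambda>n. gs n x - g1 x) \<longlonglongrightarrow> 0"
    using gs(4)
  proof eventually_elim
    case (elim x)
    show ?case
      by (rule tendsto_sandwich[of "\<lambda>n. 0" _ sequentially "\<lambda>n. gs n x"]) (use elim in \<open>auto intro: diff_le_self_ennreal\<close>)
  qed
  have "AE x in M. gs 0 x - g1 x \<le> g2 x" by (rule minus_part_le[OF fin1 gs(2) gs(3)])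
  then show ?thesis using dom_D[OF g2, of "\<lambda>n x. gs n x - g1 x"] m d z by blast
qed

lemma split_bound:
  assumes "a \<in> borel_measurable M" "g1 \<in> borel_measurable M"
  shows "\<rho> a \<le> ennreal K * (\<rho> (\<lambda>x. min (a x) (g1 x)) + \<rho> (\<lambda>x. a x - g1 x))"
proof -
  have m1: "(\<lambda>x. min (a x) (g1 x)) \<in> borel_measurable M" using assms by (auto intro: borel_measurable_min)
  have m2: "(\<lambda>x. a x - g1 x) \<in> borel_measurable M" using assms by (auto intro: borel_measurable_minus_ennreal)
  have "a x \<le> min (a x) (g1 x) + (a x - g1 x)" for x
  proof (cases "a x \<le> g1 x")
    case True then show ?thesis by simp
  next
    case False then show ?thesis by (simp add: add_diff_inverse_ennreal)
  qed
  then have "\<rho> a \<le> \<rho> (\<lambda>x. min (a x) (g1 x) + (a x - g1 x))"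
    using m1 m2 assms by (intro Q2) auto
  also have "\<dots> \<le> ennreal K * (\<rho> (\<lambda>x. min (a x) (g1 x)) + \<rho> (\<lambda>x. a x - g1 x))"
    by (rule K_tri[OF m1 m2])
  finally show ?thesis .
qed

lemma tendsto_K: "(f \<longlonglongrightarrow> 0) \<Longrightarrow> (g \<longlonglongrightarrow> 0) \<Longrightarrow> ((\<lambda>n. ennreal K * (f n + g n)) \<longlonglongrightarrow> 0)"
  using ennreal_tendsto_cmult[of "ennreal K" "\<lambda>n. f n + g n" 0 sequentially] tendsto_add[of f 0 sequentially g 0]
  by simp

lemma dom_sum:
  assumes g1: "dominating_fun M \<rho> g1" and g2: "dominating_fun M \<rho> g2"
    and h: "h \<in> borel_measurable M" and le: "AE x in M. h x \<le> g1 x + g2 x" and fin1: "\<And>x. g1 x < top"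
  shows "dominating_fun M \<rho> h"
proof -
  have g1m: "g1 \<in> borel_measurable M" "\<rho> g1 < \<infinity>" using g1 by (auto simp: dominating_fun_def)
  have g2m: "g2 \<in> borel_measurable M" "\<rho> g2 < \<infinity>" using g2 by (auto simp: dominating_fun_def)
  have "\<rho> h \<le> \<rho> (\<lambda>x. g1 x + g2 x)" using Q2[OF h _ le] g1m g2m by auto
  also have "\<dots> \<le> ennreal K * (\<rho> g1 + \<rho> g2)" by (rule K_tri[OF g1m(1) g2m(1)])
  also have "\<dots> < \<infinity>" using g1m g2m by (simp add: ennreal_mult_less_top)
  finally have fin: "\<rho> h < \<infinity>" .
  moreover have "(\<lambda>n. \<rho> (gs n)) \<longlonglongrightarrow> 0"
    if gs: "\<forall>n. gs n \<in> borel_measurable M" "\<forall>n. AE x in M. gs (Suc n) x \<le> gs n x"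
       "AE x in M. gs 0 x \<le> h x" "AE x in M. (\<lambda>n. gs n x) \<longlonglongrightarrow> 0" for gs
  proof -
    have le0: "AE x in M. gs 0 x \<le> g1 x + g2 x" using gs(3) le by eventually_elim (rule order_trans)
    have "(\<lambda>n. ennreal K * (\<rho> (\<lambda>x. min (gs n x) (g1 x)) + \<rho> (\<lambda>x. gs n x - g1 x))) \<longlonglongrightarrow> 0"
      by (rule tendsto_K[OF min_part[OF g1 gs(1,2,4)] minus_part[OF g2 g1m(1) fin1 gs(1,2) le0 gs(4)]])
    from tendsto_sandwich[OF _ _ tendsto_const this] show ?thesis
      using split_bound gs(1) g1m(1) by (auto intro!: always_eventually)
  qed
  ultimately show ?thesis using h unfolding dominating_fun_def by blast
qed

lemma dom_cmult:
  assumes g: "dominating_fun M \<rho> g" and c: "0 \<le> c"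
  shows "dominating_fun M \<rho> (\<lambda>x. ennreal c * g x)"
proof (cases "c = 0")
  case True
  have "dominating_fun M \<rho> (\<lambda>x. 0)" by (rule dom_mono[OF g]) auto
  then show ?thesis using True by simp
next
  case False
  then have c0: "0 < c" using c by simp
  have gm: "g \<in> borel_measurable M" "\<rho> g < \<infinity>" using g by (auto simp: dominating_fun_def)
  have "\<rho> (\<lambda>x. ennreal c * g x) = ennreal c * \<rho> g" using Q1[OF gm(1) c] .
  then have fin: "\<rho> (\<lambda>x. ennreal c * g x) < \<infinity>" using gm(2) by (simp add: ennreal_mult_less_top)
  have cm: "(\<lambda>x. ennreal c * g x) \<in> borel_measurable M" using gm(1) by (auto intro: borel_measurable_times_ennreal)
  moreover have "(\<lambda>n. \<rho> (gs n)) \<longlonglongrightarrow> 0"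
    if gs: "\<forall>n. gs n \<in> borel_measurable M" "\<forall>n. AE x in M. gs (Suc n) x \<le> gs n x"
       "AE x in M. gs 0 x \<le> ennreal c * g x" "AE x in M. (\<lambda>n. gs n x) \<longlonglongrightarrow> 0" for gs
  proof -
    define hs where "hs = (\<lambda>n x. ennreal (1/c) * gs n x)"
    have inv: "ennreal c * ennreal (1/c) = 1" using c0 by (simp add: ennreal_mult[symmetric])
    have gs_eq: "gs n = (\<lambda>x. ennreal c * hs n x)" for n
      unfolding hs_def by (simp add: mult.assoc[symmetric] inv)
    have hm: "\<forall>n. hs n \<in> borel_measurable M" using gs(1) unfolding hs_def by (auto intro: borel_measurable_times_ennreal)
    have hd: "\<forall>n. AE x in M. hs (Suc n) x \<le> hs n x"
    proof
      fix n show "AE x in M. hs (Suc n) x \<le> hs n x"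
        using gs(2)[rule_format, of n] unfolding hs_def by eventually_elim (rule mult_left_mono, auto)
    qed
    have h0: "AE x in M. hs 0 x \<le> g x" using gs(3)
    proof eventually_elim
      case (elim x)
      have "hs 0 x \<le> ennreal (1/c) * (ennreal c * g x)" unfolding hs_def using elim by (rule mult_left_mono) simp
      also have "\<dots> = g x" using inv by (simp add: mult.assoc[symmetric] mult.commute)
      finally show ?case .
    qed
    have hz: "AE x in M. (\<lambda>n. hs n x) \<longlonglongrightarrow> 0" using gs(4)
      unfolding hs_def by eventually_elim (use ennreal_tendsto_cmult[of "ennreal (1/c)"] in force)
    have "(\<lambda>n. \<rho> (hs n)) \<longlonglongrightarrow> 0" by (rule dom_D[OF g hm hd h0 hz])
    then have "(\<lambda>n. ennreal c * \<rho> (hs n)) \<longlonglongrightarrow> 0"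
      using ennreal_tendsto_cmult[of "ennreal c"] by force
    moreover have "\<rho> (gs n) = ennreal c * \<rho> (hs n)" for n
      unfolding gs_eq using Q1 hm c by blast
    ultimately show ?thesis by simp
  qed
  ultimately show ?thesis using fin unfolding dominating_fun_def by blast
qed


lemma span_dom:
  assumes loc: "locally_dominating M \<rho>" and s: "s \<in> simple_span M"
  shows "dominating_fun M \<rho> (\<lambda>x. ennreal (norm (s x :: 'f::real_normed_field)))"
proof -
  obtain n :: nat and c E where sdef: "s = (\<lambda>x. \<Sum>i<n. (c i :: 'f) * indicator (E i) x)"
    and E: "\<forall>i<n. E i \<in> sets M \<and> emeasure M (E i) < \<infinity>"
    using s unfolding simple_span_def by blast
  have "dominating_fun M \<rho> (indicator {})"
    using loc unfolding locally_dominating_def by simp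
  moreover have "(indicator {} :: 'a \<Rightarrow> ennreal) = (\<lambda>x. 0)" by (rule ext) simp
  ultimately have d0: "dominating_fun M \<rho> (\<lambda>x. 0)" by simp
  have sumdom: "m \<le> n \<Longrightarrow> dominating_fun M \<rho> (\<lambda>x. \<Sum>i<m. ennreal (norm (c i)) * indicator (E i) x)" for m
  proof (induction m)
    case 0 then show ?case using d0 by simp
  next
    case (Suc m)
    have IH: "dominating_fun M \<rho> (\<lambda>x. \<Sum>i<m. ennreal (norm (c i)) * indicator (E i) x)"
      using Suc by simp
    have "dominating_fun M \<rho> (indicator (E m))" using loc E Suc.prems unfolding locally_dominating_def by auto
    then have t: "dominating_fun M \<rho> (\<lambda>x. ennreal (norm (c m)) * indicator (E m) x)"
      by (rule dom_cmult) simp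
    have "(\<lambda>x. \<Sum>i<Suc m. ennreal (norm (c i)) * indicator (E i) x) \<in> borel_measurable M"
      using E Suc.prems by (intro borel_measurable_sum borel_measurable_times_ennreal borel_measurable_indicator) auto
    then show ?case
      by (rule dom_sum[OF t IH]) (auto simp: indicator_def ennreal_mult_less_top)
  qed
  have mS: "(\<lambda>x. ennreal (norm (s x))) \<in> borel_measurable M"
    using nf_meas[OF borel_measurable_simple_function[OF simple_span_sf[OF s]]] .
  have le: "ennreal (norm (s x)) \<le> (\<Sum>i<n. ennreal (norm (c i)) * indicator (E i) x)" for x
  proof -
    have "norm (s x) \<le> (\<Sum>i<n. norm (c i * indicator (E i) x))" unfolding sdef by (rule norm_sum)
    also have "\<dots> = (\<Sum>i<n. norm (c i) * indicator (E i) x)" by (intro sum.cong) (auto simp: norm_mult indicator_def)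
    finally have "ennreal (norm (s x)) \<le> ennreal (\<Sum>i<n. norm (c i) * indicator (E i) x)"
      by (rule ennreal_leI)
    also have "\<dots> = (\<Sum>i<n. ennreal (norm (c i) * indicator (E i) x))" by (simp add: sum_ennreal)
    also have "\<dots> = (\<Sum>i<n. ennreal (norm (c i)) * indicator (E i) x)"
      by (simp add: ennreal_mult' ennreal_indicator)
    finally show ?thesis .
  qed
  show ?thesis by (rule dom_mono[OF sumdom[OF order_refl] mS]) (use le in auto)
qed


lemma Lb_sub_Ld:
  assumes loc: "locally_dominating M \<rho>"
  shows "(Lb M \<rho> :: ('a \<Rightarrow> 'f::real_normed_field) set) \<subseteq> Ld M \<rho>"
proof
  fix f :: "'a \<Rightarrow> 'f" assume f: "f \<in> Lb M \<rho>"
  then have fL: "f \<in> Lrho M \<rho>"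
    and app: "\<And>e. 0 < e \<Longrightarrow> \<exists>s\<in>simple_span M. \<rho> (\<lambda>x. ennreal (norm (f x - s x))) < ennreal e"
    by (auto simp: Lb_def)
  have fm: "f \<in> borel_measurable M" and fin: "\<rho> (\<lambda>x. ennreal (norm (f x))) < \<infinity>"
    using fL by (auto simp: Lrho_def)
  have nfm: "(\<lambda>x. ennreal (norm (f x))) \<in> borel_measurable M" by (rule nf_meas[OF fm])
  have "dominating_fun M \<rho> (\<lambda>x. ennreal (norm (f x)))"
    unfolding dominating_fun_def
  proof (intro conjI allI impI nfm fin)
    fix gs :: "nat \<Rightarrow> 'a \<Rightarrow> ennreal"
    assume gs1: "\<forall>n. gs n \<in> borel_measurable M" and gs2: "\<forall>n. AE x in M. gs (Suc n) x \<le> gs n x"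
      and gs3: "AE x in M. gs 0 x \<le> ennreal (norm (f x))" and gs4: "AE x in M. (\<lambda>n. gs n x) \<longlonglongrightarrow> 0"
    show "(\<lambda>n. \<rho> (gs n)) \<longlonglongrightarrow> 0"
    proof (rule order_tendstoI)
      fix a :: ennreal assume "a < 0" then show "\<forall>\<^sub>F n in sequentially. a < \<rho> (gs n)" by simp
    next
      fix a :: ennreal assume a: "0 < a"
      obtain e where e: "0 < e" "ennreal K * (ennreal e + ennreal e) < a" using small[OF a] by blast
      obtain s where s: "s \<in> simple_span M" "\<rho> (\<lambda>x. ennreal (norm (f x - s x))) < ennreal e"
        using app[OF e(1)] by blast
      define g1 where "g1 = (\<lambda>x. ennreal (norm (s x)))"
      define g2 where "g2 = (\<lambda>x. ennreal (norm (f x - s x)))"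
      have g1d: "dominating_fun M \<rho> g1" unfolding g1_def by (rule span_dom[OF loc s(1)])
      have g1m: "g1 \<in> borel_measurable M" using g1d by (simp add: dominating_fun_def)
      have g1f: "\<And>x. g1 x < top" unfolding g1_def by simp
      have g2m: "g2 \<in> borel_measurable M"
        unfolding g2_def by (rule nf_meas[OF meas_diff_simple[OF fm simple_span_sf[OF s(1)]]])
      have le0: "AE x in M. gs 0 x \<le> g1 x + g2 x" using gs3
      proof eventually_elim
        case (elim x)
        have "norm (f x) \<le> norm (s x) + norm (f x - s x)" using norm_triangle_ineq[of "s x" "f x - s x"] by simp
        then have "ennreal (norm (f x)) \<le> g1 x + g2 x" unfolding g1_def g2_def
          by (simp add: ennreal_plus[symmetric] del: ennreal_plus)
        then show ?case using elim by (rule order_trans[rotated])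
      qed
      have "\<forall>\<^sub>F n in sequentially. \<rho> (\<lambda>x. min (gs n x) (g1 x)) < ennreal e"
        using min_part[OF g1d gs1 gs2 gs4] e(1) by (intro order_tendstoD(2)) auto
      then show "\<forall>\<^sub>F n in sequentially. \<rho> (gs n) < a"
      proof eventually_elim
        case (elim n)
        have mm: "(\<lambda>x. gs n x - g1 x) \<in> borel_measurable M" using gs1 g1m by (auto intro: borel_measurable_minus_ennreal)
        have "\<rho> (\<lambda>x. gs n x - g1 x) \<le> \<rho> g2"
          by (rule Q2[OF mm g2m minus_part_le[OF g1f gs2 le0]])
        also have "\<dots> \<le> ennreal e" using s(2) unfolding g2_def by simp
        finally have b: "\<rho> (\<lambda>x. gs n x - g1 x) \<le> ennreal e" .
        have "\<rho> (gs n) \<le> ennreal K * (\<rho> (\<lambda>x. min (gs n x) (g1 x)) + \<rho> (\<lambda>x. gs n x - g1 x))"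
          using split_bound gs1 g1m by blast
        also have "\<dots> \<le> ennreal K * (ennreal e + ennreal e)"
          using elim b by (intro mult_left_mono add_mono) auto
        also have "\<dots> < a" by (rule e(2))
        finally show ?case .
      qed
    qed
  qed
  then show "f \<in> Ld M \<rho>" using fL by (simp add: Ld_def)
qed


lemma Ld_sub_Lb:
  assumes sf: "sigma_finite_measure M"
  shows "(Ld M \<rho> :: ('a \<Rightarrow> 'f::real_normed_field) set) \<subseteq> Lb M \<rho>"
proof
  fix f :: "'a \<Rightarrow> 'f" assume f: "f \<in> Ld M \<rho>"
  then have fL: "f \<in> Lrho M \<rho>" and dom: "dominating_fun M \<rho> (\<lambda>x. ennreal (norm (f x)))"
    by (auto simp: Ld_def)
  have fm: "f \<in> borel_measurable M" using fL by (simp add: Lrho_def)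
  have nfm: "(\<lambda>x. ennreal (norm (f x))) \<in> borel_measurable M" by (rule nf_meas[OF fm])
  obtain A :: "nat \<Rightarrow> 'a set" where A: "range A \<subseteq> sets M" "(\<Union>i. A i) = space M"
    "\<And>i. emeasure M (A i) \<noteq> \<infinity>" "incseq A"
    using sigma_finite_measure.sigma_finite_incseq[OF sf] by metis
  define B where "B n = A n \<inter> ((\<lambda>x. norm (f x)) -` {..real n} \<inter> space M)" for n
  have Bm: "B n \<in> sets M" for n
  proof -
    have "(\<lambda>x. norm (f x)) -` {..real n} \<inter> space M \<in> sets M"
      using measurable_sets[OF measurable_compose[OF fm borel_measurable_norm], of "{..real n}"] by auto
    moreover have "A n \<in> sets M" using A(1) by auto
    ultimately show ?thesis unfolding B_def by (metis sets.Int)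
  qed
  have Bfin: "emeasure M (B n) < \<infinity>" for n
  proof -
    have "emeasure M (B n) \<le> emeasure M (A n)" using A(1) unfolding B_def by (intro emeasure_mono) auto
    then show ?thesis using A(3)[of n] by (simp add: less_top)
  qed
  have Bsp: "B n \<subseteq> space M" for n unfolding B_def by auto
  have Binc: "n \<le> m \<Longrightarrow> B n \<subseteq> B m" for n m
    using A(4) unfolding B_def incseq_def by auto
  have Bcov: "\<exists>N. \<forall>n\<ge>N. x \<in> B n" if x: "x \<in> space M" for x
  proof -
    obtain i where i: "x \<in> A i" using x A(2) by blast
    define N where "N = max i (nat \<lceil>norm (f x)\<rceil>)"
    have "x \<in> B n" if "N \<le> n" for n
    proof -
      have "x \<in> A n" using i A(4) that unfolding N_def incseq_def by auto
      moreover have "norm (f x) \<le> real n" using that unfolding N_def by linarith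
      ultimately show ?thesis using x unfolding B_def by simp
    qed
    then show ?thesis by blast
  qed
  define gs where "gs n x = ennreal (norm (f x)) * indicator (space M - B n) x" for n x
  have gs1: "\<forall>n. gs n \<in> borel_measurable M"
    unfolding gs_def using nfm Bm by (auto intro!: borel_measurable_times_ennreal borel_measurable_indicator)
  have gs2: "\<forall>n. AE x in M. gs (Suc n) x \<le> gs n x"
    using Binc[of n "Suc n" for n] unfolding gs_def
    by (auto intro!: AE_I2 mult_left_mono simp: indicator_def)
  have gs3: "AE x in M. gs 0 x \<le> ennreal (norm (f x))"
    unfolding gs_def by (auto intro!: AE_I2 simp: indicator_def)
  have gs4: "AE x in M. (\<lambda>n. gs n x) \<longlonglongrightarrow> 0"
  proof (rule AE_I2)
    fix x assume x: "x \<in> space M"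
    obtain N where N: "\<forall>n\<ge>N. x \<in> B n" using Bcov[OF x] by blast
    have "\<forall>\<^sub>F n in sequentially. gs n x = 0"
      unfolding eventually_sequentially gs_def using N by (intro exI[of _ N]) auto
    then show "(\<lambda>n. gs n x) \<longlonglongrightarrow> 0" by (rule tendsto_eventually)
  qed
  have gsz: "(\<lambda>n. \<rho> (gs n)) \<longlonglongrightarrow> 0" by (rule dom_D[OF dom gs1 gs2 gs3 gs4])
  show "f \<in> Lb M \<rho>"
    unfolding Lb_def
  proof (intro CollectI conjI allI impI fL)
    fix eps :: real assume eps: "0 < eps"
    obtain d where d: "0 < d" "ennreal K * (ennreal d + ennreal d) < ennreal eps"
      using small[of "ennreal eps"] eps by auto
    have "\<forall>\<^sub>F n in sequentially. \<rho> (gs n) < ennreal d"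
      using gsz d(1) by (intro order_tendstoD(2)) auto
    then obtain N where N: "\<rho> (gs N) < ennreal d" unfolding eventually_sequentially by blast
    have rB: "\<rho> (indicator (B N)) < \<infinity>" by (rule Q3[OF Bm Bfin])
    define r where "r = enn2real (\<rho> (indicator (B N)))"
    have r0: "0 \<le> r" unfolding r_def by simp
    have rr: "\<rho> (indicator (B N)) = ennreal r" unfolding r_def using rB by (simp add: ennreal_enn2real less_top)
    define eta where "eta = d / (r + 1)"
    have eta0: "0 < eta" unfolding eta_def using d(1) r0 by simp
    have "eta * r \<le> d" unfolding eta_def using d(1) r0 by (simp add: field_simps)
    then have etab: "ennreal eta * \<rho> (indicator (B N)) \<le> ennreal d"
      unfolding rr using eta0 r0 by (metis ennreal_leI ennreal_mult less_imp_le)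
    obtain cs :: "'f list" where cs: "\<And>v. norm v \<le> real N \<Longrightarrow> \<exists>c\<in>set cs. dist c v < eta"
      using fin_net[OF eta0, of "real N"] by blast
    define k where "k = length cs"
    define c where "c i = cs ! i" for i
    define D where "D j = (\<lambda>x. dist (c j) (f x)) -` {..<eta} \<inter> space M" for j
    have Dm: "D j \<in> sets M" for j
    proof -
      have "(\<lambda>y. dist (c j) y) \<in> borel_measurable borel"
        by (intro borel_measurable_continuous_onI continuous_intros)
      from measurable_compose[OF fm this] show ?thesis unfolding D_def by (intro measurable_sets) auto
    qed
    define E where "E i = (B N \<inter> D i) - (\<Union>j\<in>{..<i}. D j)" for i
    have Em: "E i \<in> sets M" for i unfolding E_def using Bm Dm by auto
    have Efin: "emeasure M (E i) < \<infinity>" for i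
    proof -
      have "emeasure M (E i) \<le> emeasure M (B N)" using Bm unfolding E_def by (intro emeasure_mono) auto
      then show ?thesis using Bfin[of N] by (rule le_less_trans)
    qed
    define s where "s x = (\<Sum>i<k. c i * indicator (E i) x)" for x
    have sS: "s \<in> simple_span M"
      unfolding simple_span_def s_def[abs_def] using Em Efin by blast
    have Edisj: "x \<in> E i \<Longrightarrow> x \<in> E j \<Longrightarrow> i = j" for x i j
      unfolding E_def by (cases i j rule: linorder_cases) auto
    have pw: "ennreal (norm (f x - s x)) \<le> gs N x + ennreal eta * indicator (B N) x" if x: "x \<in> space M" for x
    proof (cases "x \<in> B N")
      case False
      then have "x \<notin> E i" for i unfolding E_def by auto
      then have "s x = 0" unfolding s_def by simp
      then show ?thesis using False x unfolding gs_def by simp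
    next
      case True
      then have "norm (f x) \<le> real N" unfolding B_def by simp
      then obtain cc where cc: "cc \<in> set cs" "dist cc (f x) < eta" using cs by blast
      then obtain i where i: "i < k" "x \<in> D i"
        unfolding k_def c_def D_def using x by (auto simp: in_set_conv_nth)
      define i0 where "i0 = (LEAST i. x \<in> D i)"
      have i0D: "x \<in> D i0" unfolding i0_def using i(2) by (rule LeastI)
      have i0le: "i0 \<le> i" unfolding i0_def using i(2) by (rule Least_le)
      have i0k: "i0 < k" using i0le i(1) by simp
      have "x \<notin> D j" if "j < i0" for j unfolding i0_def using that not_less_Least i0_def by blast
      then have xE: "x \<in> E i0" unfolding E_def using True i0D by auto
      have "s x = (\<Sum>i<k. if i = i0 then c i else 0)"
        unfolding s_def by (intro sum.cong) (use xE Edisj in \<open>auto simp: indicator_def\<close>)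
      also have "\<dots> = c i0" using i0k by simp
      finally have "norm (f x - s x) < eta" using i0D unfolding D_def by (simp add: dist_norm norm_minus_commute)
      then have "ennreal (norm (f x - s x)) \<le> ennreal eta" by (intro ennreal_leI) simp
      also have "\<dots> = ennreal eta * indicator (B N) x" using True by simp
      also have "\<dots> \<le> gs N x + ennreal eta * indicator (B N) x" by simp
      finally show ?thesis .
    qed
    have m1: "(\<lambda>x. ennreal (norm (f x - s x))) \<in> borel_measurable M"
      by (rule nf_meas[OF meas_diff_simple[OF fm simple_span_sf[OF sS]]])
    have m2: "(\<lambda>x. ennreal eta * indicator (B N) x) \<in> borel_measurable M"
      using Bm by (auto intro!: borel_measurable_times_ennreal borel_measurable_indicator)
    have "\<rho> (\<lambda>x. ennreal (norm (f x - s x))) \<le> \<rho> (\<lambda>x. gs N x + ennreal eta * indicator (B N) x)"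
      using gs1 m2 by (intro Q2[OF m1] AE_I2 pw borel_measurable_add) auto
    also have "\<dots> \<le> ennreal K * (\<rho> (gs N) + \<rho> (\<lambda>x. ennreal eta * indicator (B N) x))"
      using gs1 m2 by (intro K_tri) auto
    also have "\<rho> (\<lambda>x. ennreal eta * indicator (B N) x) = ennreal eta * \<rho> (indicator (B N))"
      using Q1[of "indicator (B N)" eta] Bm eta0 by auto
    also have "ennreal K * (\<rho> (gs N) + ennreal eta * \<rho> (indicator (B N))) \<le> ennreal K * (ennreal d + ennreal d)"
      using N etab by (intro mult_left_mono add_mono) auto
    also have "\<dots> < ennreal eps" by (rule d(2))
    finally show "\<exists>s\<in>simple_span M. \<rho> (\<lambda>x. ennreal (norm (f x - s x))) < ennreal eps"
      using sS by blast
  qed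
qed

end

theorem corollary3p29:
  fixes M :: "'a measure" and \<rho> :: "('a \<Rightarrow> ennreal) \<Rightarrow> ennreal"
  assumes "sigma_finite_measure M" and "function_quasi_norm M \<rho>"
  shows "(locally_dominating M \<rho> \<longleftrightarrow>
            (Ld M \<rho> :: ('a \<Rightarrow> 'f::real_normed_field) set) = Lb M \<rho>)
       \<and> (dominating_qn M \<rho> TYPE('f) \<longrightarrow> minimal_qn M \<rho> TYPE('f))"
proof -
  interpret fqn M \<rho> by unfold_locales (rule assms(2))
  have part1: "locally_dominating M \<rho> \<longleftrightarrow> (Ld M \<rho> :: ('a \<Rightarrow> 'f) set) = Lb M \<rho>"
  proof
    assume loc: "locally_dominating M \<rho>"
    show "(Ld M \<rho> :: ('a \<Rightarrow> 'f) set) = Lb M \<rho>"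
      using Lb_sub_Ld[OF loc, where 'f='f] Ld_sub_Lb[OF assms(1), where 'f='f] by blast
  next
    assume eq: "(Ld M \<rho> :: ('a \<Rightarrow> 'f) set) = Lb M \<rho>"
    show "locally_dominating M \<rho>" unfolding locally_dominating_def
    proof (intro ballI impI)
      fix E assume E: "E \<in> sets M" "emeasure M E < \<infinity>"
      define g where "g = (\<lambda>x. indicator E x :: 'f)"
      have nfg: "(\<lambda>x. ennreal (norm (g x))) = indicator E" unfolding g_def by (rule nf_indicator)
      have gm: "g \<in> borel_measurable M" unfolding g_def using E(1) by (rule borel_measurable_indicator)
      have gL: "g \<in> Lrho M \<rho>" unfolding Lrho_def using nfg Q3[OF E] gm by simp
      have gS: "g \<in> simple_span M" unfolding simple_span_def g_def
        by (intro CollectI exI[of _ "1::nat"] exI[of _ "\<lambda>_. 1::'f"] exI[of _ "\<lambda>_. E"]) (use E in auto)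
      have "\<rho> (\<lambda>x. ennreal (norm (g x - g x))) < ennreal e" if "0 < e" for e
        using rho0 that by simp
      then have "g \<in> Lb M \<rho>" unfolding Lb_def using gL gS by blast
      then have "g \<in> Ld M \<rho>" using eq by simp
      then show "dominating_fun M \<rho> (indicator E)" using nfg by (simp add: Ld_def)
    qed
  qed
  have part2: "dominating_qn M \<rho> TYPE('f) \<longrightarrow> minimal_qn M \<rho> TYPE('f)"
  proof
    assume "dominating_qn M \<rho> TYPE('f)"
    then have eq: "(Ld M \<rho> :: ('a \<Rightarrow> 'f) set) = Lrho M \<rho>" by (simp add: dominating_qn_def)
    have "(Lb M \<rho> :: ('a \<Rightarrow> 'f) set) \<subseteq> Lrho M \<rho>" by (auto simp: Lb_def)
    moreover have "(Lrho M \<rho> :: ('a \<Rightarrow> 'f) set) \<subseteq> Lb M \<rho>" using Ld_sub_Lb[OF assms(1)] eq by blast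
    ultimately show "minimal_qn M \<rho> TYPE('f)" by (simp add: minimal_qn_def)
  qed
  show ?thesis using part1 part2 by blast
qed

end
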